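(* Let $G_{\mathrm{vc}}=(V_{\mathrm{vc}},E_{\mathrm{vc}})$ be a vertex-capacitated graph and $G_{\mathrm{ec}}$ the corresponding directed edge-capacitated graph. Then for any $u,v\in V_{\mathrm{vc}}$, $\mathrm{dist}_{G_{\mathrm{vc}}}(u,v)=\mathrm{dist}_{G_{\mathrm{ec}}}(u_{\mathrm{mid}},v_{\mathrm{mid}})=\mathrm{dist}_{G_{\mathrm{ec}}}(v_{\mathrm{mid}},u_{\mathrm{mid}})$.
   Context: A vertex-capacitated graph is a finite undirected graph with positive lengths $\ell$ and capacities $u$ on vertices and edges; the length of a path is the sum of the lengths of its vertices and edges, and $\mathrm{dist}_{G_{\mathrm{vc}}}$ is the resulting shortest-path distance. The corresponding directed graph $G_{\mathrm{ec}}$: for each $v\in V_{\mathrm{vc}}$, vertices $v_{\mathrm{in}},v_{\mathrm{mid}},v_{\mathrm{out}}$ and directed edges $(v_{\mathrm{in}},v_{\mathrm{mid}}),(v_{\mathrm{mid}},v_{\mathrm{out}}),(v_{\mathrm{in}},v_{\mathrm{out}})$, each of length $\ell(v)$ and capacity $u(v)$; for each $\{u,v\}\in E_{\mathrm{vc}}$, directed edges $(u_{\mathrm{out}},v_{\mathrm{in}})$ and $(v_{\mathrm{out}},u_{\mathrm{in}})$ of length $\ell(\{u,v\})$ and capacity $u(\{u,v\})$. $\mathrm{dist}_{G_{\mathrm{ec}}}$ is directed shortest-path distance (sum of edge lengths). *)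

theory Defs
  imports Complex_Main "HOL-Library.Extended_Real"
begin

text \<open>Capacities play no role for distances.\<close>

definition vc_graph ::
  "'a set \<Rightarrow> 'a set set \<Rightarrow> ('a \<Rightarrow> real) \<Rightarrow> ('a set \<Rightarrow> real)
   \<Rightarrow> ('a \<Rightarrow> real) \<Rightarrow> ('a set \<Rightarrow> real) \<Rightarrow> bool" where
  "vc_graph V E lv le cv ce \<longleftrightarrow>
     finite V \<and> (\<forall>e\<in>E. e \<subseteq> V \<and> card e = 2) \<and>
     (\<forall>v\<in>V. lv v > 0 \<and> cv v > 0) \<and> (\<forall>e\<in>E. le e > 0 \<and> ce e > 0)"

definition vc_path :: "'a set \<Rightarrow> 'a set set \<Rightarrow> 'a \<Rightarrow> 'a \<Rightarrow> 'a list \<Rightarrow> bool" where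
  "vc_path V E u v p \<longleftrightarrow> p \<noteq> [] \<and> hd p = u \<and> last p = v \<and> distinct p \<and> set p \<subseteq> V \<and>
     (\<forall>i. Suc i < length p \<longrightarrow> {p ! i, p ! Suc i} \<in> E)"

text \<open>Length: sum of the lengths of its vertices and edges; the trivial
one-vertex path (u = v) has length 0 (so that dist(u,u) = 0).\<close>
definition vc_path_len :: "('a \<Rightarrow> real) \<Rightarrow> ('a set \<Rightarrow> real) \<Rightarrow> 'a list \<Rightarrow> real" where
  "vc_path_len lv le p =
     (if length p \<le> 1 then 0
      else sum_list (map lv p) + sum_list (map (\<lambda>(x, y). le {x, y}) (zip p (tl p))))"

definition vc_dist ::
  "'a set \<Rightarrow> 'a set set \<Rightarrow> ('a \<Rightarrow> real) \<Rightarrow> ('a set \<Rightarrow> real) \<Rightarrow> 'a \<Rightarrow> 'a \<Rightarrow> ereal" where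
  "vc_dist V E lv le u v = Inf {ereal (vc_path_len lv le p) | p. vc_path V E u v p}"

definition dir_path :: "'v set \<Rightarrow> ('v \<times> 'v) set \<Rightarrow> 'v \<Rightarrow> 'v \<Rightarrow> 'v list \<Rightarrow> bool" where
  "dir_path W A s t p \<longleftrightarrow> p \<noteq> [] \<and> hd p = s \<and> last p = t \<and> distinct p \<and> set p \<subseteq> W \<and>
     (\<forall>i. Suc i < length p \<longrightarrow> (p ! i, p ! Suc i) \<in> A)"

definition dir_path_len :: "('v \<times> 'v \<Rightarrow> real) \<Rightarrow> 'v list \<Rightarrow> real" where
  "dir_path_len len p = sum_list (map len (zip p (tl p)))"

definition dir_dist ::
  "'v set \<Rightarrow> ('v \<times> 'v) set \<Rightarrow> ('v \<times> 'v \<Rightarrow> real) \<Rightarrow> 'v \<Rightarrow> 'v \<Rightarrow> ereal" where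
  "dir_dist W A len s t = Inf {ereal (dir_path_len len p) | p. dir_path W A s t p}"

datatype copy = In | Mid | Out

definition ec_verts :: "'a set \<Rightarrow> ('a \<times> copy) set" where
  "ec_verts V = V \<times> UNIV"

definition ec_arcs :: "'a set \<Rightarrow> 'a set set \<Rightarrow> (('a \<times> copy) \<times> ('a \<times> copy)) set" where
  "ec_arcs V E =
     {((v, In), (v, Mid)) | v. v \<in> V} \<union> {((v, Mid), (v, Out)) | v. v \<in> V} \<union>
     {((v, In), (v, Out)) | v. v \<in> V} \<union>
     {((x, Out), (y, In)) | x y. {x, y} \<in> E}"

definition ec_len :: "('a \<Rightarrow> real) \<Rightarrow> ('a set \<Rightarrow> real) \<Rightarrow> ('a \<times> copy) \<times> ('a \<times> copy) \<Rightarrow> real" where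
  "ec_len lv le a = (if fst (fst a) = fst (snd a) then lv (fst (fst a))
                     else le {fst (fst a), fst (snd a)})"

definition ec_cap :: "('a \<Rightarrow> real) \<Rightarrow> ('a set \<Rightarrow> real) \<Rightarrow> ('a \<times> copy) \<times> ('a \<times> copy) \<Rightarrow> real" where
  "ec_cap cv ce a = (if fst (fst a) = fst (snd a) then cv (fst (fst a))
                     else ce {fst (fst a), fst (snd a)})"

definition ec_dist ::
  "'a set \<Rightarrow> 'a set set \<Rightarrow> ('a \<Rightarrow> real) \<Rightarrow> ('a set \<Rightarrow> real) \<Rightarrow> 'a \<times> copy \<Rightarrow> 'a \<times> copy \<Rightarrow> ereal" where
  "ec_dist V E lv le = dir_dist (ec_verts V) (ec_arcs V E) (ec_len lv le)"

end

theory Submission imports Defs begin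

definition esum :: "('a set \<Rightarrow> real) \<Rightarrow> 'a list \<Rightarrow> real" where
  "esum le p = sum_list (map (\<lambda>(x, y). le {x, y}) (zip p (tl p)))"

lemma esum_simps[simp]: "esum le [] = 0" "esum le [a] = 0"
  "esum le (a # b # L) = le {a,b} + esum le (b # L)"
  by (simp_all add: esum_def)

lemma esum_split: "esum le (xs @ y # zs) = esum le (xs @ [y]) + esum le (y # zs)"
proof (induction xs)
  case Nil then show ?case by simp
next
  case (Cons a xs) then show ?case by (cases xs) auto
qed

lemma esum_rev: "esum le (rev xs) = esum le xs"
proof (induction xs)
  case Nil then show ?case by simp
next
  case (Cons a xs) then show ?case
  proof (cases xs)
    case Nil then show ?thesis by simp
  next
    case (Cons b xs')
    have "esum le (rev (a # xs)) = esum le (rev xs' @ b # [a])" using Cons by simp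
    also have "\<dots> = esum le (rev xs' @ [b]) + le {b, a}" by (subst esum_split) simp
    also have "\<dots> = esum le (rev xs) + le {a,b}" using Cons by (simp add: insert_commute)
    finally show ?thesis using Cons.IH \<open>xs = b # xs'\<close> by simp
  qed
qed

lemma esum_nonneg: "successively (\<lambda>x y. {x,y} \<in> E) p \<Longrightarrow> \<forall>e\<in>E. le e > 0 \<Longrightarrow> esum le p \<ge> 0"
  by (induction "\<lambda>x y. {x,y} \<in> E" p rule: successively.induct) (auto intro: add_nonneg_nonneg less_imp_le)

lemma vc_path_len_alt: "vc_path_len lv le p = (if length p \<le> 1 then 0 else sum_list (map lv p) + esum le p)"
  by (simp add: vc_path_len_def esum_def)

lemma vc_path_alt: "vc_path V E u v p \<longleftrightarrow> p \<noteq> [] \<and> hd p = u \<and> last p = v \<and> distinct p \<and> set p \<subseteq> V \<and>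
     successively (\<lambda>x y. {x,y} \<in> E) p"
  by (simp add: vc_path_def successively_conv_nth)

lemma dir_path_alt: "dir_path W A s t p \<longleftrightarrow> p \<noteq> [] \<and> hd p = s \<and> last p = t \<and> distinct p \<and> set p \<subseteq> W \<and>
     successively (\<lambda>x y. (x,y) \<in> A) p"
  by (simp add: dir_path_def successively_conv_nth)

lemma dlen_simps[simp]: "dir_path_len len [] = 0" "dir_path_len len [a] = 0"
  "dir_path_len len (a # b # L) = len (a,b) + dir_path_len len (b # L)"
  by (simp_all add: dir_path_len_def)

lemma ec_arcs_iff: "((a,ca),(b,cb)) \<in> ec_arcs V E \<longleftrightarrow>
  (a = b \<and> a \<in> V \<and> ((ca,cb) = (In,Mid) \<or> (ca,cb) = (Mid,Out) \<or> (ca,cb) = (In,Out))) \<or>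
  (ca = Out \<and> cb = In \<and> {a,b} \<in> E)"
  by (auto simp: ec_arcs_def)

lemma ec_len_same[simp]: "ec_len lv le ((x,c),(x,c')) = lv x"
  by (simp add: ec_len_def)
lemma ec_len_diff[simp]: "x \<noteq> y \<Longrightarrow> ec_len lv le ((x,c),(y,c')) = le {x,y}"
  by (simp add: ec_len_def)

lemma vc_rev: "vc_path V E u v p \<Longrightarrow> vc_path V E v u (rev p) \<and> vc_path_len lv le (rev p) = vc_path_len lv le p"
  by (auto simp: vc_path_alt vc_path_len_alt esum_rev hd_rev last_rev insert_commute rev_map[symmetric])

lemma Inf_eq_from: "(\<forall>s\<in>A. \<exists>t\<in>B. t \<le> s) \<Longrightarrow> (\<forall>t\<in>B. \<exists>s\<in>A. s \<le> t) \<Longrightarrow> Inf A = Inf (B::ereal set)"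
  by (meson Inf_greatest Inf_lower2 antisym)


definition wlen where "wlen lv le p = sum_list (map lv p) + esum le p"

lemma shortcut:
  assumes "successively (\<lambda>x y. {x,y} \<in> E) p" "set p \<subseteq> V" "p \<noteq> []"
    "\<forall>x\<in>V. lv x > 0" "\<forall>e\<in>E. le e > 0"
  shows "\<exists>p'. vc_path V E (hd p) (last p) p' \<and> vc_path_len lv le p' \<le> wlen lv le p"
  using assms(1-3)
proof (induction p rule: length_induct)
  case (1 p)
  show ?case
  proof (cases "distinct p")
    case True
    have "sum_list (map lv p) \<ge> 0" using 1(3) assms(4)
      by (intro sum_list_nonneg) (auto intro: less_imp_le)
    moreover have "esum le p \<ge> 0" using esum_nonneg 1(2) assms(5) by blast
    ultimately have "vc_path_len lv le p \<le> wlen lv le p"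
      by (auto simp: vc_path_len_alt wlen_def)
    then show ?thesis using True 1 by (auto simp: vc_path_alt)
  next
    case False
    then obtain xs ys zs y where p: "p = xs @ y # ys @ y # zs" using not_distinct_decomp by fastforce
    define p2 where "p2 = xs @ y # zs"
    have len: "length p2 < length p" by (simp add: p p2_def)
    have s: "successively (\<lambda>x y. {x,y} \<in> E) p2"
      using 1(2) unfolding p p2_def
      by (auto simp: successively_append_iff successively_Cons)
    have ne: "p2 \<noteq> []" by (simp add: p2_def)
    have st: "set p2 \<subseteq> V" using 1(3) by (auto simp: p p2_def)
    obtain p' where p': "vc_path V E (hd p2) (last p2) p'" "vc_path_len lv le p' \<le> wlen lv le p2"
      using 1(1)[rule_format, OF len s st ne] by blast
    have hd: "hd p2 = hd p" by (cases xs) (auto simp: p p2_def)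
    have lst: "last p2 = last p" by (cases zs) (auto simp: p p2_def)
    have e1: "esum le p = esum le (xs @ [y]) + esum le (y # ys @ [y]) + esum le (y # zs)"
    proof -
      have "esum le p = esum le (xs @ [y]) + esum le ((y # ys) @ y # zs)" unfolding p
        using esum_split[of le xs y "ys @ y # zs"] by simp
      also have "esum le ((y # ys) @ y # zs) = esum le ((y # ys) @ [y]) + esum le (y # zs)"
        by (rule esum_split)
      finally show ?thesis by simp
    qed
    have e2: "esum le p2 = esum le (xs @ [y]) + esum le (y # zs)"
      unfolding p2_def by (rule esum_split)
    have "successively (\<lambda>x y. {x,y} \<in> E) (xs @ ((y # ys @ [y]) @ zs))"
      using 1(2) unfolding p by simp
    then have "successively (\<lambda>x y. {x,y} \<in> E) ((y # ys @ [y]) @ zs)"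
      using successively_append_iff by blast
    then have "successively (\<lambda>x y. {x,y} \<in> E) (y # ys @ [y])"
      using successively_append_iff by blast
    then have e3: "esum le (y # ys @ [y]) \<ge> 0" using esum_nonneg assms(5) by blast
    have "sum_list (map lv (y # ys)) \<ge> 0" using 1(3) assms(4) unfolding p
      by (intro sum_list_nonneg) (auto intro: less_imp_le)
    then have "wlen lv le p2 \<le> wlen lv le p"
      using e1 e2 e3 by (auto simp: wlen_def p p2_def)
    then show ?thesis using p' hd lst by force
  qed
qed


lemma wlen_Cons2[simp]: "wlen lv le (a # b # L) = lv a + le {a,b} + wlen lv le (b # L)"
  by (simp add: wlen_def)

lemma edge_neq: "vc_graph V E lv le cv ce \<Longrightarrow> {x,y} \<in> E \<Longrightarrow> x \<noteq> y"
proof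
  assume "vc_graph V E lv le cv ce" "{x,y} \<in> E" "x = y"
  then have "card {x,y} = 2" unfolding vc_graph_def by blast
  then show False using \<open>x = y\<close> by simp
qed

lemma edge_V: "vc_graph V E lv le cv ce \<Longrightarrow> {x,y} \<in> E \<Longrightarrow> x \<in> V \<and> y \<in> V"
  unfolding vc_graph_def by blast

lemma ec_lower:
  assumes G: "vc_graph V E lv le cv ce"
  shows "successively (\<lambda>a b. (a,b) \<in> ec_arcs V E) q \<Longrightarrow> q \<noteq> [] \<Longrightarrow> hd q = (x,Out) \<Longrightarrow> last q = (v,Mid)
    \<Longrightarrow> \<exists>w. length w \<ge> 2 \<and> hd w = x \<and> last w = v \<and> successively (\<lambda>x y. {x,y} \<in> E) w \<and> set w \<subseteq> V
         \<and> wlen lv le w - lv x \<le> dir_path_len (ec_len lv le) q"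
proof (induction q arbitrary: x rule: length_induct)
  case (1 q)
  have lvpos: "\<And>z. z \<in> V \<Longrightarrow> lv z > 0" using G by (auto simp: vc_graph_def)
  obtain r where q: "q = (x,Out) # r" using 1(3,4) by (cases q) auto
  obtain b r1 where r: "r = b # r1" using 1(5) q by (cases r) auto
  obtain y cb where b: "b = (y, cb)" by (cases b)
  have "((x,Out),(y,cb)) \<in> ec_arcs V E" using 1(2) q r b by simp
  then have xy: "{x,y} \<in> E" and cb: "cb = In" by (auto simp: ec_arcs_iff)
  have xney: "x \<noteq> y" using edge_neq[OF G xy] .
  have xV: "x \<in> V" and yV: "y \<in> V" using edge_V[OF G xy] by auto
  obtain c r2 where r1: "r1 = c # r2" using 1(5) q r b cb by (cases r1) auto
  obtain y' cc where c: "c = (y', cc)" by (cases c)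
  have "((y,In),(y',cc)) \<in> ec_arcs V E" using 1(2) q r b r1 c cb by simp
  then have y': "y' = y" and cc: "cc = Mid \<or> cc = Out" by (auto simp: ec_arcs_iff)
  have s2: "successively (\<lambda>a b. (a,b) \<in> ec_arcs V E) (c # r2)" using 1(2) q r r1 by simp
  have Lq: "dir_path_len (ec_len lv le) q = le {x,y} + lv y + dir_path_len (ec_len lv le) (c # r2)"
    using q r r1 b c cb y' xney by simp
  show ?case
  proof (cases "cc = Mid")
    case True
    show ?thesis
    proof (cases r2)
      case Nil
      have "dir_path_len (ec_len lv le) q = le {x,y} + lv y" using Lq Nil by simp
      moreover have "last q = (y, Mid)" using q r r1 c y' True Nil by simp
      ultimately show ?thesis using 1(5) xy xV yV
        by (intro exI[of _ "[x,y]"]) (auto simp: wlen_def)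
    next
      case (Cons d r3)
      obtain y'' cd where d: "d = (y'', cd)" by (cases d)
      have "((y,Mid),(y'',cd)) \<in> ec_arcs V E" using s2 c y' True Cons d by simp
      then have dd: "d = (y, Out)" using d by (auto simp: ec_arcs_iff)
      have s3: "successively (\<lambda>a b. (a,b) \<in> ec_arcs V E) (d # r3)" using s2 Cons by simp
      have Lc: "dir_path_len (ec_len lv le) (c # r2) = lv y + dir_path_len (ec_len lv le) (d # r3)"
        using c y' True Cons dd by simp
      have len: "length (d # r3) < length q" using q r r1 Cons by simp
      have lst: "last (d # r3) = (v, Mid)" using 1(5) q r r1 Cons by simp
      have ex: "\<exists>w. length w \<ge> 2 \<and> hd w = y \<and> last w = v \<and> successively (\<lambda>x y. {x,y} \<in> E) w \<and> set w \<subseteq> V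
         \<and> wlen lv le w - lv y \<le> dir_path_len (ec_len lv le) (d # r3)"
        by (rule 1(1)[rule_format, OF len s3 _ _ lst]) (simp_all add: dd)
      obtain w where w: "length w \<ge> 2" "hd w = y" "last w = v"
        "successively (\<lambda>x y. {x,y} \<in> E) w" "set w \<subseteq> V"
        "wlen lv le w - lv y \<le> dir_path_len (ec_len lv le) (d # r3)"
        using ex by blast
      obtain w' where ww: "w = y # w'" using w(1,2) by (cases w) auto
      have "w' \<noteq> []" using w(1) ww by auto
      then have "wlen lv le (x # w) = lv x + le {x,y} + wlen lv le w" using ww by (cases w') auto
      moreover have "lv y > 0" using lvpos yV by blast
      moreover have "successively (\<lambda>x y. {x,y} \<in> E) (x # w)" using w(4) ww xy by simp
      moreover have "last (x # w) = v" using w(1,3) by auto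
      ultimately show ?thesis using w xV Lq Lc
        by (intro exI[of _ "x # w"]) auto
    qed
  next
    case False
    then have cO: "c = (y, Out)" using cc c y' by simp
    have len: "length (c # r2) < length q" using q r r1 by simp
    have lst: "last (c # r2) = (v, Mid)" using 1(5) q r r1 by simp
    have ex: "\<exists>w. length w \<ge> 2 \<and> hd w = y \<and> last w = v \<and> successively (\<lambda>x y. {x,y} \<in> E) w \<and> set w \<subseteq> V
         \<and> wlen lv le w - lv y \<le> dir_path_len (ec_len lv le) (c # r2)"
        by (rule 1(1)[rule_format, OF len s2 _ _ lst]) (simp_all add: cO)
    obtain w where w: "length w \<ge> 2" "hd w = y" "last w = v"
      "successively (\<lambda>x y. {x,y} \<in> E) w" "set w \<subseteq> V"
      "wlen lv le w - lv y \<le> dir_path_len (ec_len lv le) (c # r2)"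
      using ex by blast
    obtain w' where ww: "w = y # w'" using w(1,2) by (cases w) auto
    have "w' \<noteq> []" using w(1) ww by auto
    then have "wlen lv le (x # w) = lv x + le {x,y} + wlen lv le w" using ww by (cases w') auto
    moreover have "successively (\<lambda>x y. {x,y} \<in> E) (x # w)" using w(4) ww xy by simp
    moreover have "last (x # w) = v" using w(1,3) by auto
    ultimately show ?thesis using w xV Lq
      by (intro exI[of _ "x # w"]) auto
  qed
qed


fun emb :: "'a list \<Rightarrow> ('a \<times> copy) list" where
  "emb [] = []"
| "emb [y] = [(y,In),(y,Mid)]"
| "emb (y # z # zs) = (y,In) # (y,Out) # emb (z # zs)"

lemma emb_hd[simp]: "hd (emb (y # ys)) = (y, In)"
  by (cases ys) auto

lemma emb_ne[simp]: "emb (y # ys) \<noteq> []"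
  by (cases ys) auto

lemma emb_last: "ys \<noteq> [] \<Longrightarrow> last (emb ys) = (last ys, Mid)"
  by (induction ys rule: emb.induct) auto

lemma emb_set: "a \<in> set (emb ys) \<Longrightarrow> fst a \<in> set ys"
  by (induction ys rule: emb.induct) auto

lemma emb_distinct: "distinct ys \<Longrightarrow> distinct (emb ys)"
  by (induction ys rule: emb.induct) (auto dest: emb_set)

lemma emb_succ:
  assumes G: "vc_graph V E lv le cv ce"
  shows "successively (\<lambda>x y. {x,y} \<in> E) ys \<Longrightarrow> set ys \<subseteq> V \<Longrightarrow>
    successively (\<lambda>a b. (a,b) \<in> ec_arcs V E) (emb ys)"
proof (induction ys rule: emb.induct)
  case (3 y z zs)
  then show ?case by (auto simp: ec_arcs_iff successively_Cons)
qed (auto simp: ec_arcs_iff)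

lemma emb_len:
  assumes G: "vc_graph V E lv le cv ce"
  shows "successively (\<lambda>x y. {x,y} \<in> E) ys \<Longrightarrow> ys \<noteq> [] \<Longrightarrow>
    dir_path_len (ec_len lv le) (emb ys) = wlen lv le ys"
proof (induction ys rule: emb.induct)
  case (2 y)
  then show ?case by (simp add: wlen_def)
next
  case (3 y z zs)
  have "y \<noteq> z" using edge_neq[OF G] 3(2) by simp
  then show ?case using 3 by (cases zs) auto
qed auto


lemma dlen_nonneg:
  assumes G: "vc_graph V E lv le cv ce"
  shows "successively (\<lambda>a b. (a,b) \<in> ec_arcs V E) q \<Longrightarrow> dir_path_len (ec_len lv le) q \<ge> 0"
proof (induction q rule: induct_list012)
  case (3 x y zs)
  obtain a ca where x: "x = (a,ca)" by (cases x)
  obtain b cb where y: "y = (b,cb)" by (cases y)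
  have arc: "((a,ca),(b,cb)) \<in> ec_arcs V E" using 3(3) x y by simp
  have "ec_len lv le (x,y) \<ge> 0"
  proof (cases "a = b")
    case True
    then have "a \<in> V" using arc edge_neq[OF G, of a a] by (auto simp: ec_arcs_iff)
    then show ?thesis using G True x y by (auto simp: vc_graph_def intro: less_imp_le)
  next
    case False
    then have "{a,b} \<in> E" using arc by (auto simp: ec_arcs_iff)
    then show ?thesis using G False x y by (auto simp: vc_graph_def intro: less_imp_le)
  qed
  then show ?case using 3 by simp
qed auto

lemma vclen_nonneg:
  assumes G: "vc_graph V E lv le cv ce" and p: "vc_path V E u v p"
  shows "vc_path_len lv le p \<ge> 0"
proof -
  have "sum_list (map lv p) \<ge> 0" using p G
    by (intro sum_list_nonneg) (auto simp: vc_path_alt vc_graph_def intro: less_imp_le)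
  moreover have "esum le p \<ge> 0"
  proof -
    have lep: "\<forall>e\<in>E. le e > 0" using G by (auto simp: vc_graph_def)
    have "successively (\<lambda>x y. {x,y} \<in> E) p" using p by (simp add: vc_path_alt)
    then show ?thesis using esum_nonneg[OF _ lep] by blast
  qed
  ultimately show ?thesis by (simp add: vc_path_len_alt)
qed

lemma main_eq:
  assumes G: "vc_graph V E lv le cv ce" and uV: "u \<in> V" and vV: "v \<in> V"
  shows "vc_dist V E lv le u v = ec_dist V E lv le (u, Mid) (v, Mid)"
  unfolding vc_dist_def ec_dist_def dir_dist_def
proof (rule Inf_eq_from; intro ballI)
  let ?L = "dir_path_len (ec_len lv le)"
  fix s assume "s \<in> {ereal (vc_path_len lv le p) |p. vc_path V E u v p}"
  then obtain p where s: "s = ereal (vc_path_len lv le p)" and p: "vc_path V E u v p" by blast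
  show "\<exists>t\<in>{ereal (?L q) |q. dir_path (ec_verts V) (ec_arcs V E) (u, Mid) (v, Mid) q}. t \<le> s"
  proof (cases "u = v")
    case True
    have "dir_path (ec_verts V) (ec_arcs V E) (u, Mid) (v, Mid) [(u,Mid)]"
      using True uV by (simp add: dir_path_alt ec_verts_def)
    moreover have "ereal (?L [(u,Mid)]) \<le> s" using s vclen_nonneg[OF G p] by simp
    ultimately show ?thesis by blast
  next
    case False
    obtain ys where pu: "p = u # ys" using p by (cases p) (auto simp: vc_path_alt)
    have ys: "ys \<noteq> []" using p pu False by (auto simp: vc_path_alt)
    have sy: "successively (\<lambda>x y. {x,y} \<in> E) ys" "set ys \<subseteq> V" "distinct ys" "u \<notin> set ys"
      "{u, hd ys} \<in> E" "last ys = v"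
      using p pu ys by (auto simp: vc_path_alt successively_Cons)
    define q where "q = (u,Mid) # (u,Out) # emb ys"
    obtain y ys' where ys': "ys = y # ys'" using ys by (cases ys) auto
    have d1: "distinct q" unfolding q_def using emb_distinct[OF sy(3)] emb_set[of _ ys] sy(4) by force
    have "\<forall>a\<in>set (emb ys). fst a \<in> V" using emb_set sy(2) by blast
    then have d2: "set q \<subseteq> ec_verts V" using uV by (auto simp: ec_verts_def q_def mem_Times_iff)
    have d3: "last q = (v, Mid)" unfolding q_def using emb_last[OF ys] sy(6) ys' by simp
    have d4: "successively (\<lambda>a b. (a,b) \<in> ec_arcs V E) q" unfolding q_def
      using emb_succ[OF G sy(1,2)] uV sy(5) ys' by (simp add: ec_arcs_iff successively_Cons)
    have "dir_path (ec_verts V) (ec_arcs V E) (u, Mid) (v, Mid) q"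
      unfolding dir_path_alt using d1 d2 d3 d4 by (simp add: q_def)
    moreover have "?L q = vc_path_len lv le p"
    proof -
      have "u \<noteq> y" using edge_neq[OF G] sy(5) ys' by simp
      then have "?L q = lv u + le {u,y} + wlen lv le ys"
        unfolding q_def using emb_len[OF G sy(1) ys] ys' by (cases ys') auto
      also have "\<dots> = wlen lv le p" using pu ys' by simp
      also have "\<dots> = vc_path_len lv le p" using pu ys' by (simp add: vc_path_len_alt wlen_def)
      finally show ?thesis .
    qed
    ultimately show ?thesis using s by force
  qed
next
  let ?L = "dir_path_len (ec_len lv le)"
  fix t assume "t \<in> {ereal (?L q) |q. dir_path (ec_verts V) (ec_arcs V E) (u, Mid) (v, Mid) q}"
  then obtain q where t: "t = ereal (?L q)" and q: "dir_path (ec_verts V) (ec_arcs V E) (u, Mid) (v, Mid) q" by blast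
  have qs: "successively (\<lambda>a b. (a,b) \<in> ec_arcs V E) q" using q by (simp add: dir_path_alt)
  show "\<exists>s\<in>{ereal (vc_path_len lv le p) |p. vc_path V E u v p}. s \<le> t"
  proof (cases "u = v")
    case True
    have "vc_path V E u v [u]" using True uV by (simp add: vc_path_alt)
    moreover have "ereal (vc_path_len lv le [u]) \<le> t" using t dlen_nonneg[OF G qs]
      by (simp add: vc_path_len_alt)
    ultimately show ?thesis by blast
  next
    case False
    obtain r where qr: "q = (u,Mid) # r" using q by (cases q) (auto simp: dir_path_alt)
    have rne: "r \<noteq> []" using q qr False by (auto simp: dir_path_alt)
    obtain b r' where rb: "r = b # r'" using rne by (cases r) auto
    obtain y cb where b: "b = (y, cb)" by (cases b)
    have "((u,Mid),(y,cb)) \<in> ec_arcs V E" using qs qr rb b by simp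
    then have bb: "b = (u, Out)" using b by (auto simp: ec_arcs_iff)
    have rs: "successively (\<lambda>a b. (a,b) \<in> ec_arcs V E) r" using qs qr rb by simp
    have rl: "last r = (v, Mid)" using q qr rne by (simp add: dir_path_alt)
    obtain w where w: "length w \<ge> 2" "hd w = u" "last w = v" "successively (\<lambda>x y. {x,y} \<in> E) w"
      "set w \<subseteq> V" "wlen lv le w - lv u \<le> ?L r"
      using ec_lower[OF G rs rne _ rl, of u] rb bb by auto
    have Lq: "?L q = lv u + ?L r" using qr rb bb by simp
    have wne: "w \<noteq> []" using w(1) by auto
    have lvp: "\<forall>x\<in>V. lv x > 0" and lep: "\<forall>e\<in>E. le e > 0" using G by (auto simp: vc_graph_def)
    obtain p' where p': "vc_path V E u v p'" "vc_path_len lv le p' \<le> wlen lv le w"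
      using shortcut[OF w(4) w(5) wne lvp lep] w(2,3) by auto
    have "ereal (vc_path_len lv le p') \<le> t" using p'(2) w(6) Lq t by simp
    then show ?thesis using p'(1) by blast
  qed
qed

theorem lemma4p6:
  fixes V :: "'a set" and E :: "'a set set"
    and lv cv :: "'a \<Rightarrow> real" and le ce :: "'a set \<Rightarrow> real"
  assumes "vc_graph V E lv le cv ce"
    and "u \<in> V" and "v \<in> V"
  shows "vc_dist V E lv le u v = ec_dist V E lv le (u, Mid) (v, Mid)
       \<and> ec_dist V E lv le (u, Mid) (v, Mid) = ec_dist V E lv le (v, Mid) (u, Mid)"
proof -
  have sym: "vc_dist V E lv le u v = vc_dist V E lv le v u"
  proof -
    have "{ereal (vc_path_len lv le p) |p. vc_path V E u v p} = {ereal (vc_path_len lv le p) |p. vc_path V E v u p}"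
    proof (intro equalityI subsetI)
      fix s assume "s \<in> {ereal (vc_path_len lv le p) |p. vc_path V E u v p}"
      then obtain p where sp: "s = ereal (vc_path_len lv le p)" and pp: "vc_path V E u v p" by blast
      have r: "vc_path V E v u (rev p) \<and> vc_path_len lv le (rev p) = vc_path_len lv le p"
        using vc_rev[OF pp] by blast
      show "s \<in> {ereal (vc_path_len lv le p) |p. vc_path V E v u p}"
        unfolding mem_Collect_eq using r sp by (intro exI[of _ "rev p"]) simp
    next
      fix s assume "s \<in> {ereal (vc_path_len lv le p) |p. vc_path V E v u p}"
      then obtain p where sp: "s = ereal (vc_path_len lv le p)" and pp: "vc_path V E v u p" by blast
      have r: "vc_path V E u v (rev p) \<and> vc_path_len lv le (rev p) = vc_path_len lv le p"
        using vc_rev[OF pp] by blast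
      show "s \<in> {ereal (vc_path_len lv le p) |p. vc_path V E u v p}"
        unfolding mem_Collect_eq using r sp by (intro exI[of _ "rev p"]) simp
    qed
    then show ?thesis by (simp add: vc_dist_def)
  qed
  show ?thesis using main_eq[OF assms] main_eq[OF assms(1,3,2)] sym by simp
qed

end
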